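(* Let $c$ and $n$ be odd positive integers with $n>c$. Consider lattice paths in an $(n-c-1)\times(n-c-1)$ grid from the top-left corner to the bottom-right corner, using unit right and down steps and never going strictly below the diagonal joining these two corners. Then the number of such paths with an even number of unit squares of the grid lying above the path exceeds the number with an odd number of such squares by $C_{\frac{n-c-2}{2}}$, where $C_r=\frac{1}{r+1}\binom{2r}{r}$ is the $r$th Catalan number. *)

theory Defs
  imports Complex_Main
begin

text \<open>A lattice path in an m x m grid from the top-left to the bottom-right corner is
encoded as a list of steps: True = unit step right, False = unit step down.\<close>

definition rights :: "bool list \<Rightarrow> nat" where
  "rights p = length (filter (\<lambda>s. s) p)"

definition downs :: "bool list \<Rightarrow> nat" where
  "downs p = length (filter (\<lambda>s. \<not> s) p)"

text \<open>Paths never going strictly below the diagonal joining the top-left and the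
bottom-right corner: after every prefix, the number of down steps does not exceed
the number of right steps.\<close>

definition grid_paths :: "nat \<Rightarrow> bool list set" where
  "grid_paths m = {p. length p = 2 * m \<and> rights p = m \<and> downs p = m \<and>
      (\<forall>k \<le> length p. downs (take k p) \<le> rights (take k p))}"

text \<open>Number of unit squares of the grid lying above the path: a down step taken
at horizontal position x (= number of right steps before it) has the m - x squares of
its row to its right, i.e. above the path.\<close>

definition squares_above :: "nat \<Rightarrow> bool list \<Rightarrow> nat" where
  "squares_above m p = (\<Sum>i\<in>{i. i < length p \<and> \<not> p ! i}. m - rights (take i p))"

definition catalan :: "nat \<Rightarrow> real" where
  "catalan r = (1 / real (r + 1)) * real ((2 * r) choose r)"

end

theory Submission
  imports Defs
begin

lemma aux_fr: "(A::real) > 0 \<Longrightarrow> B > 0 \<Longrightarrow> A * B * (P / A * Y + Q / B * X) = B * P * Y + A * Q * X"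
  by (simp add: distrib_left)

definition F :: "nat \<Rightarrow> nat \<Rightarrow> real" where
  "F i j = (real i + 1 - real j) / (real i + 1) * real ((i + j) choose j)"

lemma ballot: "F (Suc i) (Suc j) = F i (Suc j) + F (Suc i) j"
proof -
  define X where "X = real (Suc (i + j) choose j)"
  define Y where "Y = real (Suc (i + j) choose Suc j)"
  have rel: "real (Suc i) * X = real (Suc j) * Y"
    using Suc_times_binomial_add[of j i] unfolding X_def Y_def
    by (metis (mono_tags, lifting) add.commute mult.commute of_nat_mult)
  have e1: "real ((Suc i + Suc j) choose Suc j) = X + Y"
    by (simp add: X_def Y_def)
  have e2: "real ((i + Suc j) choose Suc j) = Y" by (simp add: Y_def)
  have e3: "real ((Suc i + j) choose j) = X" by (simp add: X_def)
  have key: "(real i + 1) * (real i + 2) * ((real i + 1 - real j) / (real i + 2) * (X + Y))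
     = (real i + 1) * (real i + 2) * ((real i - real j) / (real i + 1) * Y + (real i + 2 - real j) / (real i + 2) * X)"
  proof -
    have "(real i + 1) * (real i + 2) * ((real i + 1 - real j) / (real i + 2) * (X + Y))
        = (real i + 1) * (real i + 1 - real j) * (X + Y)" by (simp add: field_simps)
    also have "\<dots> = (real i + 2) * (real i - real j) * Y + (real i + 1) * (real i + 2 - real j) * X"
      using rel by (simp add: algebra_simps)
    also have "\<dots> = (real i + 1) * (real i + 2) * ((real i - real j) / (real i + 1) * Y + (real i + 2 - real j) / (real i + 2) * X)"
      by (rule aux_fr[symmetric]) auto
    finally show ?thesis .
  qed
  have "(real i + 1 - real j) / (real i + 2) * (X + Y) = (real i - real j) / (real i + 1) * Y + (real i + 2 - real j) / (real i + 2) * X"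
    using key by simp
  then show ?thesis unfolding F_def e1 e2 e3
    by (simp add: algebra_simps)
qed

lemma rights_simps[simp]: "rights [] = 0" "rights (xs @ ys) = rights xs + rights ys"
  "rights [True] = 1" "rights [False] = 0"
  by (simp_all add: rights_def)

lemma downs_simps[simp]: "downs [] = 0" "downs (xs @ ys) = downs xs + downs ys"
  "downs [True] = 0" "downs [False] = 1"
  by (simp_all add: downs_def)

lemma rights_downs_len: "rights p + downs p = length p"
  unfolding rights_def downs_def by (induction p) auto

definition pp :: "nat \<Rightarrow> nat \<Rightarrow> bool list set" where
  "pp a b = {p. length p = a + b \<and> rights p = a \<and> downs p = b \<and>
      (\<forall>k \<le> length p. downs (take k p) \<le> rights (take k p))}"

lemma finite_pp: "finite (pp a b)"
proof -
  have "pp a b \<subseteq> {p. set p \<subseteq> UNIV \<and> length p = a + b}" by (auto simp: pp_def)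
  moreover have "finite {p::bool list. set p \<subseteq> UNIV \<and> length p = a + b}"
    by (rule finite_lists_length_eq) simp
  ultimately show ?thesis by (rule finite_subset)
qed

lemma pref_snoc: "(\<forall>k \<le> length (q @ [x]). downs (take k (q @ [x])) \<le> rights (take k (q @ [x]))) \<longleftrightarrow>
   (\<forall>k \<le> length q. downs (take k q) \<le> rights (take k q)) \<and> downs (q @ [x]) \<le> rights (q @ [x])"
  (is "?L \<longleftrightarrow> ?R")
proof
  assume L: ?L
  have "downs (take k q) \<le> rights (take k q)" if "k \<le> length q" for k
    using L[rule_format, of k] that by simp
  moreover have "downs (q @ [x]) \<le> rights (q @ [x])"
    using L[rule_format, of "Suc (length q)"] by simp
  ultimately show ?R by blast
next
  assume R: ?R
  show ?L
  proof (intro allI impI)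
    fix k assume k: "k \<le> length (q @ [x])"
    show "downs (take k (q @ [x])) \<le> rights (take k (q @ [x]))"
    proof (cases "k \<le> length q")
      case True then show ?thesis using R by simp
    next
      case False then have "k = Suc (length q)" using k by simp
      then show ?thesis using R by simp
    qed
  qed
qed

lemma pp_empty: "b > a \<Longrightarrow> pp a b = {}"
  unfolding pp_def by (auto dest!: spec[of _ "length _"])

lemma pp_00: "pp 0 0 = {[]}"
  unfolding pp_def by auto

lemma pp_split:
  assumes "a + b > 0"
  shows "pp a b = (\<lambda>q. q @ [True]) ` (if a > 0 then pp (a - 1) b else {})
               \<union> (\<lambda>q. q @ [False]) ` (if b > 0 \<and> b \<le> a then pp a (b - 1) else {})"
  (is "?L = ?R")
proof
  show "?L \<subseteq> ?R"
  proof
    fix p assume p: "p \<in> ?L"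
    then have "p \<noteq> []" using assms by (auto simp: pp_def)
    then obtain q x where pq: "p = q @ [x]" by (metis rev_exhaust)
    have c: "length p = a + b" "rights p = a" "downs p = b"
      "\<forall>k \<le> length p. downs (take k p) \<le> rights (take k p)" using p by (auto simp: pp_def)
    show "p \<in> ?R"
    proof (cases x)
      case True
      have "q \<in> pp (a - 1) b" using c pref_snoc[of q x] True
        by (auto simp: pp_def pq)
      moreover have "a > 0" using c True pq by simp
      ultimately show ?thesis using True pq by auto
    next
      case False
      have "q \<in> pp a (b - 1)" using c pref_snoc[of q x] False
        by (auto simp: pp_def pq)
      moreover have "b > 0" "b \<le> a" using c False pq by (auto dest!: spec[of _ "length p"])
      ultimately show ?thesis using False pq by auto
    qed
  qed
next
  show "?R \<subseteq> ?L"
  proof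
    fix p assume "p \<in> ?R"
    then show "p \<in> ?L"
    proof
      assume "p \<in> (\<lambda>q. q @ [True]) ` (if a > 0 then pp (a - 1) b else {})"
      then obtain q where "a > 0" "q \<in> pp (a - 1) b" "p = q @ [True]"
        by (auto split: if_splits)
      then show ?thesis using pref_snoc[of q True]
        by (auto simp: pp_def dest!: spec[of _ "length q"])
    next
      assume "p \<in> (\<lambda>q. q @ [False]) ` (if b > 0 \<and> b \<le> a then pp a (b - 1) else {})"
      then obtain q where "b > 0" "b \<le> a" "q \<in> pp a (b - 1)" "p = q @ [False]"
        by (auto split: if_splits)
      then show ?thesis using pref_snoc[of q False]
        by (auto simp: pp_def)
    qed
  qed
qed


definition wt :: "bool list \<Rightarrow> nat" where
  "wt p = (\<Sum>i<length p. if p ! i then 0 else rights (take i p))"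

lemma wt_snoc: "wt (q @ [x]) = wt q + (if x then 0 else rights q)"
proof -
  have "wt (q @ [x]) = (\<Sum>i<length q. if (q @ [x]) ! i then 0 else rights (take i (q @ [x])))
        + (if x then 0 else rights q)"
    unfolding wt_def by simp
  also have "(\<Sum>i<length q. if (q @ [x]) ! i then 0 else rights (take i (q @ [x]))) = wt q"
    unfolding wt_def by (rule sum.cong) (auto simp: nth_append)
  finally show ?thesis .
qed

definition S :: "nat \<Rightarrow> nat \<Rightarrow> int" where
  "S a b = (\<Sum>p\<in>pp a b. (-1) ^ wt p)"

lemma S_rec:
  assumes "a + b > 0"
  shows "S a b = (if a > 0 then S (a - 1) b else 0)
               + (if b > 0 \<and> b \<le> a then (-1) ^ a * S a (b - 1) else 0)"
proof -
  let ?A = "(\<lambda>q. q @ [True]) ` (if a > 0 then pp (a - 1) b else {})"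
  let ?B = "(\<lambda>q. q @ [False]) ` (if b > 0 \<and> b \<le> a then pp a (b - 1) else {})"
  have inj: "inj_on (\<lambda>q. q @ [x]) A" for x :: bool and A by (auto intro: inj_onI)
  have "S a b = (\<Sum>p\<in>?A. (-1) ^ wt p) + (\<Sum>p\<in>?B. (-1) ^ wt p)"
    unfolding S_def pp_split[OF assms]
    by (rule sum.union_disjoint) (auto simp: finite_pp)
  also have "(\<Sum>p\<in>?A. (-1::int) ^ wt p) = (if a > 0 then S (a - 1) b else 0)"
    by (simp add: sum.reindex[OF inj] wt_snoc S_def)
  also have "(\<Sum>p\<in>?B. (-1::int) ^ wt p) = (if b > 0 \<and> b \<le> a then (-1) ^ a * S a (b - 1) else 0)"
  proof (cases "b > 0 \<and> b \<le> a")
    case True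
    have "(\<Sum>p\<in>?B. (-1::int) ^ wt p) = (\<Sum>q\<in>pp a (b - 1). (-1) ^ wt (q @ [False]))"
      using True by (simp add: sum.reindex[OF inj])
    also have "\<dots> = (\<Sum>q\<in>pp a (b - 1). (-1) ^ a * (-1) ^ wt q)"
      by (rule sum.cong) (auto simp: wt_snoc pp_def power_add)
    finally show ?thesis using True by (simp add: S_def sum_distrib_left)
  qed auto
  finally show ?thesis .
qed


lemma F_0[simp]: "F i 0 = 1"
  by (simp add: F_def)

lemma F_Suc_self[simp]: "F i (Suc i) = 0"
  by (simp add: F_def)

definition G :: "nat \<Rightarrow> nat \<Rightarrow> real" where
  "G a b = (if b > a then 0 else if a = 0 then 1
     else if even a then (if odd b then 0 else F (a div 2 - 1) (b div 2))
     else (if even b then F (a div 2) (b div 2) else - F (a div 2) (b div 2)))"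

lemma G_rec:
  assumes "0 < a" "b \<le> a"
  shows "G a b = G (a - 1) b + (if b > 0 then (-1) ^ a * G a (b - 1) else 0)"
proof -
  have "\<exists>i. a = 2 * i \<or> a = Suc (2 * i)" by presburger
  then obtain i where ai: "a = 2 * i \<or> a = Suc (2 * i)" by blast
  have "\<exists>j. b = 2 * j \<or> b = Suc (2 * j)" by presburger
  then obtain j where bj: "b = 2 * j \<or> b = Suc (2 * j)" by blast
  show ?thesis
  proof (cases "a = Suc (2 * i)")
    case aodd: True
    show ?thesis
    proof (cases "b = 2 * j")
      case beven: True
      show ?thesis
      proof (cases j)
        case 0
        then show ?thesis using aodd beven by (simp add: G_def)
      next
        case (Suc j')
        then obtain i' where i': "i = Suc i'" using assms aodd beven
          by (cases i) auto
        have "G a b = F (Suc i') (Suc j')" using aodd beven Suc i' assms by (simp add: G_def)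
        moreover have "G (a - 1) b = F i' (Suc j')" using aodd beven Suc i' assms
          by (simp add: G_def)
        moreover have "G a (b - 1) = - F (Suc i') j'" using aodd beven Suc i' assms
          by (simp add: G_def)
        ultimately show ?thesis using ballot[of i' j'] aodd beven Suc by simp
      qed
    next
      case bodd: False
      then have b: "b = Suc (2 * j)" using bj by simp
      have "G a b = - F i j" using aodd b assms by (simp add: G_def)
      moreover have "G (a - 1) b = 0" using aodd b assms by (simp add: G_def)
      moreover have "G a (b - 1) = F i j" using aodd b assms by (simp add: G_def)
      ultimately show ?thesis using aodd b by simp
    qed
  next
    case aeven: False
    then have a: "a = 2 * i" using ai by simp
    then obtain i' where i': "i = Suc i'" using assms by (cases i) auto
    show ?thesis
    proof (cases "b = 2 * j")
      case beven: True
      show ?thesis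
      proof (cases j)
        case 0
        then show ?thesis using a i' beven by (simp add: G_def)
      next
        case (Suc j')
        have "G a b = F i' j" using a i' beven assms by (simp add: G_def)
        moreover have "G (a - 1) b = F i' j"
        proof (cases "j = i")
          case True then show ?thesis using a i' beven by (simp add: G_def)
        next
          case False then show ?thesis using a i' beven assms by (simp add: G_def)
        qed
        moreover have "G a (b - 1) = 0" using a i' beven Suc assms by (simp add: G_def)
        ultimately show ?thesis using beven Suc by simp
      qed
    next
      case bodd: False
      then have b: "b = Suc (2 * j)" using bj by simp
      have "G a b = 0" using a b by (simp add: G_def)
      moreover have "G (a - 1) b = - F i' j" using a i' b assms by (simp add: G_def)
      moreover have "G a (b - 1) = F i' j" using a i' b assms by (simp add: G_def)
      ultimately show ?thesis using a b by simp
    qed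
  qed
qed


lemma S_closed: "real_of_int (S a b) = G a b"
proof (induction "a + b" arbitrary: a b rule: less_induct)
  case less
  show ?case
  proof (cases "b > a")
    case True then show ?thesis by (simp add: S_def pp_empty G_def)
  next
    case False
    show ?thesis
    proof (cases "a = 0")
      case True then have "b = 0" using False by simp
      then show ?thesis using True by (simp add: S_def pp_00 wt_def G_def)
    next
      case a0: False
      have "S a b = S (a - 1) b + (if b > 0 then (-1) ^ a * S a (b - 1) else 0)"
        using S_rec[of a b] a0 False by simp
      then have "real_of_int (S a b) = G (a - 1) b + (if b > 0 then (-1) ^ a * G a (b - 1) else 0)"
        using less[of "a - 1" b] less[of a "b - 1"] a0 by auto
      then show ?thesis using G_rec[of a b] a0 False by simp
    qed
  qed
qed

lemma rights_take_le: "rights (take i p) \<le> rights p"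
proof -
  have "rights p = rights (take i p @ drop i p)" by simp
  also have "\<dots> = rights (take i p) + rights (drop i p)" by (rule rights_simps(2))
  finally show ?thesis by simp
qed

lemma sa_wt:
  assumes "p \<in> pp m m"
  shows "squares_above m p + wt p = m * m"
proof -
  let ?D = "{i. i < length p \<and> \<not> p ! i}"
  have D: "?D = {i \<in> {..<length p}. \<not> p ! i}" by auto
  have w: "wt p = (\<Sum>i\<in>?D. rights (take i p))"
    unfolding wt_def D by (subst sum.inter_filter) (auto intro: sum.cong)
  have r: "rights p = m" using assms by (simp add: pp_def)
  have "squares_above m p + wt p = (\<Sum>i\<in>?D. (m - rights (take i p)) + rights (take i p))"
    unfolding squares_above_def w by (simp add: sum.distrib)
  also have "\<dots> = (\<Sum>i\<in>?D. m)"
    by (rule sum.cong) (use rights_take_le[of _ p] r in auto)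
  also have "\<dots> = card ?D * m" by simp
  also have "card ?D = downs p"
    unfolding downs_def by (simp add: length_filter_conv_card)
  also have "downs p = m" using assms by (simp add: pp_def)
  finally show ?thesis .
qed

theorem lemma2p20:
  fixes c n :: nat
  assumes "odd c" and "odd n" and "n > c"
  shows "real (card {p \<in> grid_paths (n - c - 1). even (squares_above (n - c - 1) p)})
       - real (card {p \<in> grid_paths (n - c - 1). odd (squares_above (n - c - 1) p)})
       = catalan ((n - c - 2) div 2)"
proof -
  define m where "m = n - c - 1"
  define r where "r = (n - c - 2) div 2"
  have mr: "m = Suc (2 * r)" unfolding m_def r_def using assms by presburger
  have gp: "grid_paths m = pp m m" unfolding grid_paths_def pp_def by auto
  let ?GP = "pp m m"
  let ?sa = "squares_above m"
  have fin: "finite ?GP" by (rule finite_pp)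
  have "(\<Sum>p\<in>?GP. (-1::int) ^ ?sa p) = (\<Sum>p\<in>?GP. if even (?sa p) then 1 else -1)"
    by (rule sum.cong) auto
  also have "\<dots> = (\<Sum>p\<in>?GP \<inter> {p. even (?sa p)}. 1) + (\<Sum>p\<in>?GP \<inter> - {p. even (?sa p)}. -1)"
    by (rule sum.If_cases[OF fin])
  also have "\<dots> = int (card {p \<in> ?GP. even (?sa p)}) - int (card {p \<in> ?GP. odd (?sa p)})"
  proof -
    have "?GP \<inter> {p. even (?sa p)} = {p \<in> ?GP. even (?sa p)}" by auto
    moreover have "?GP \<inter> - {p. even (?sa p)} = {p \<in> ?GP. odd (?sa p)}" by auto
    ultimately show ?thesis by simp
  qed
  finally have e1: "int (card {p \<in> ?GP. even (?sa p)}) - int (card {p \<in> ?GP. odd (?sa p)})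
      = (\<Sum>p\<in>?GP. (-1::int) ^ ?sa p)" by simp
  have "(\<Sum>p\<in>?GP. (-1::int) ^ ?sa p) = (\<Sum>p\<in>?GP. - ((-1) ^ wt p))"
  proof (rule sum.cong)
    fix p assume p: "p \<in> ?GP"
    have "(-1::int) ^ ?sa p * (-1) ^ wt p = (-1) ^ (m * m)"
      using sa_wt[OF p] by (simp add: power_add[symmetric])
    also have "\<dots> = -1" using mr by simp
    finally have x: "(-1::int) ^ ?sa p * (-1) ^ wt p = -1" .
    have y: "(-1::int) ^ wt p * (-1) ^ wt p = 1"
      by (simp add: power_add[symmetric])
    have "(-1::int) ^ ?sa p = (-1) ^ ?sa p * ((-1) ^ wt p * (-1) ^ wt p)" using y by simp
    also have "\<dots> = - ((-1) ^ wt p)" by (simp only: mult.assoc[symmetric] x)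
    finally show "(-1::int) ^ ?sa p = - ((-1) ^ wt p)" .
  qed simp
  also have "\<dots> = - S m m" by (simp add: S_def sum_negf)
  finally have e3: "(\<Sum>p\<in>?GP. (-1::int) ^ ?sa p) = - S m m" .
  have ee: "int (card {p \<in> ?GP. even (?sa p)}) - int (card {p \<in> ?GP. odd (?sa p)}) = - S m m"
    using e1 e3 by simp
  have "real_of_int (int (card {p \<in> ?GP. even (?sa p)}) - int (card {p \<in> ?GP. odd (?sa p)}))
        = real_of_int (- S m m)" using ee by (rule arg_cong)
  then have e2: "real (card {p \<in> ?GP. even (?sa p)}) - real (card {p \<in> ?GP. odd (?sa p)})
      = - real_of_int (S m m)" by simp
  have "- real_of_int (S m m) = F r r"
    unfolding S_closed using mr by (simp add: G_def)
  also have "F r r = catalan r"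
    by (simp add: F_def catalan_def mult_2)
  finally show ?thesis using e2 gp unfolding m_def r_def by simp
qed

end
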